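(* If $G$ is an infinite, connected, locally finite graph with finite metric dimension, then $G$ does not contain an infinite family of metric rays whose vertex sets are pairwise disjoint.
   Context: $d$ denotes shortest-path distance in $G$. A vertex $x$ resolves $u,v$ if $d(u,x)\ne d(v,x)$; a set $S$ of vertices is a resolving set if every pair of distinct vertices is resolved by some vertex of $S$. The metric dimension $\beta(G)$ is the minimum cardinality of a resolving set if a finite one exists, and $\infty$ otherwise. A metric ray of $G$ with endpoint $u_0$ is an infinite subgraph $P$ whose vertices admit an ordering $u_0,u_1,u_2,\dots$ (all distinct) with $u_k$ adjacent to $u_{k+1}$ in $P$ and $d_G(u_0,u_k)=k$ for all $k\ge 0$. *)

theory Defs
  imports Main "HOL-Library.Extended_Nat"
begin

definition graph :: "'a set \<Rightarrow> ('a \<Rightarrow> 'a \<Rightarrow> bool) \<Rightarrow> bool" where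
  "graph V E \<longleftrightarrow> (\<forall>x y. E x y \<longrightarrow> x \<in> V \<and> y \<in> V) \<and> (\<forall>x y. E x y \<longrightarrow> E y x) \<and> (\<forall>x. \<not> E x x)"

inductive walk :: "('a \<Rightarrow> 'a \<Rightarrow> bool) \<Rightarrow> 'a \<Rightarrow> 'a \<Rightarrow> nat \<Rightarrow> bool" for E where
  walk_refl: "walk E x x 0"
| walk_step: "E x y \<Longrightarrow> walk E y z n \<Longrightarrow> walk E x z (Suc n)"

definition connected_graph :: "'a set \<Rightarrow> ('a \<Rightarrow> 'a \<Rightarrow> bool) \<Rightarrow> bool" where
  "connected_graph V E \<longleftrightarrow> (\<forall>x\<in>V. \<forall>y\<in>V. \<exists>n. walk E x y n)"

definition locally_finite :: "'a set \<Rightarrow> ('a \<Rightarrow> 'a \<Rightarrow> bool) \<Rightarrow> bool" where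
  "locally_finite V E \<longleftrightarrow> (\<forall>x\<in>V. finite {y. E x y})"

text \<open>Shortest-path distance (meaningful in a connected graph).\<close>
definition gdist :: "('a \<Rightarrow> 'a \<Rightarrow> bool) \<Rightarrow> 'a \<Rightarrow> 'a \<Rightarrow> nat" where
  "gdist E x y = (LEAST n. walk E x y n)"

definition resolves :: "('a \<Rightarrow> 'a \<Rightarrow> bool) \<Rightarrow> 'a \<Rightarrow> 'a \<Rightarrow> 'a \<Rightarrow> bool" where
  "resolves E x u v \<longleftrightarrow> gdist E u x \<noteq> gdist E v x"

definition resolving_set :: "'a set \<Rightarrow> ('a \<Rightarrow> 'a \<Rightarrow> bool) \<Rightarrow> 'a set \<Rightarrow> bool" where
  "resolving_set V E S \<longleftrightarrow> S \<subseteq> V \<and>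
     (\<forall>u\<in>V. \<forall>v\<in>V. u \<noteq> v \<longrightarrow> (\<exists>x\<in>S. resolves E x u v))"

definition metric_dim :: "'a set \<Rightarrow> ('a \<Rightarrow> 'a \<Rightarrow> bool) \<Rightarrow> enat" where
  "metric_dim V E =
     (if \<exists>S. finite S \<and> resolving_set V E S
      then enat (LEAST k. \<exists>S. finite S \<and> resolving_set V E S \<and> card S = k)
      else \<infinity>)"

definition metric_ray :: "'a set \<Rightarrow> ('a \<Rightarrow> 'a \<Rightarrow> bool) \<Rightarrow> (nat \<Rightarrow> 'a) \<Rightarrow> bool" where
  "metric_ray V E u \<longleftrightarrow> inj u \<and> range u \<subseteq> V \<and> (\<forall>k. E (u k) (u (Suc k))) \<and>
     (\<forall>k. gdist E (u 0) (u k) = k)"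

end

theory Submission
  imports Defs "HOL-Library.FuncSet"
begin

lemma walk_trans: "walk E x y n \<Longrightarrow> walk E y z m \<Longrightarrow> walk E x z (n+m)"
  by (induction rule: walk.induct) (auto intro: walk.intros)

lemma gdist_walk: "walk E x y n \<Longrightarrow> walk E x y (gdist E x y)"
  unfolding gdist_def by (rule LeastI)

lemma gdist_le: "walk E x y n \<Longrightarrow> gdist E x y \<le> n"
  unfolding gdist_def by (rule Least_le)

lemma gdist_tri: "walk E x y n \<Longrightarrow> walk E y z m \<Longrightarrow> gdist E x z \<le> gdist E x y + gdist E y z"
  by (meson gdist_le gdist_walk walk_trans)

lemma gdist_step: "E x y \<Longrightarrow> walk E y z m \<Longrightarrow> gdist E x z \<le> gdist E y z + 1"
  by (metis Suc_eq_plus1 gdist_le gdist_walk walk_step)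

lemma ray_V: "metric_ray V E u \<Longrightarrow> u k \<in> V"
  unfolding metric_ray_def by blast

lemma discrete_ivt:
  fixes g :: "nat \<Rightarrow> nat"
  assumes "g 0 \<le> R" "\<And>k. g (Suc k) \<le> g k + 1" "\<exists>k. g k \<ge> R"
  shows "\<exists>k. g k = R"
proof -
  define k where "k = (LEAST k. g k \<ge> R)"
  have k: "g k \<ge> R" using assms(3) unfolding k_def by (metis LeastI)
  show ?thesis
  proof (cases k)
    case 0 then show ?thesis using k assms(1) by auto
  next
    case (Suc j)
    have "\<not> g j \<ge> R" using Suc unfolding k_def
      by (metis Suc_n_not_le_n not_less_Least k_def lessI)
    then show ?thesis using Suc k assms(2)[of j] by (intro exI[of _ k]) auto
  qed
qed

theorem theorem2:
  fixes V :: "'a set" and E :: "'a \<Rightarrow> 'a \<Rightarrow> bool"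
  assumes "graph V E"
    and "infinite V"
    and "connected_graph V E"
    and "locally_finite V E"
    and "metric_dim V E < \<infinity>"
  shows "\<not> (\<exists>F. infinite F \<and> (\<forall>u\<in>F. metric_ray V E u) \<and>
              (\<forall>u\<in>F. \<forall>w\<in>F. u \<noteq> w \<longrightarrow> range u \<inter> range w = {}))"
proof
  assume "\<exists>F. infinite F \<and> (\<forall>u\<in>F. metric_ray V E u) \<and>
              (\<forall>u\<in>F. \<forall>w\<in>F. u \<noteq> w \<longrightarrow> range u \<inter> range w = {})"
  then obtain F where Finf: "infinite F" and Fray: "\<forall>u\<in>F. metric_ray V E u"
    and Fdisj: "\<forall>u\<in>F. \<forall>w\<in>F. u \<noteq> w \<longrightarrow> range u \<inter> range w = {}" by blast
  obtain S where Sfin: "finite S" and Sres: "resolving_set V E S"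
    using assms(5) unfolding metric_dim_def by (auto split: if_splits)
  have SV: "S \<subseteq> V" using Sres unfolding resolving_set_def by auto
  obtain a b where ab: "a \<in> V" "b \<in> V" "a \<noteq> b"
    using assms(2) by (metis finite.simps finite_insert insertCI subsetI finite_subset)
  then obtain s1 where s1: "s1 \<in> S" using Sres unfolding resolving_set_def by blast
  have s1V: "s1 \<in> V" using s1 SV by auto
  have conn: "\<And>v w. v \<in> V \<Longrightarrow> w \<in> V \<Longrightarrow> walk E v w (gdist E v w)"
    using assms(3) unfolding connected_graph_def by (meson gdist_walk)
  have sym: "\<And>x y. E x y \<Longrightarrow> E y x" and EV: "\<And>x y. E x y \<Longrightarrow> x \<in> V \<and> y \<in> V"
    using assms(1) unfolding graph_def by auto
  define D where "D = Max ((\<lambda>s. gdist E s s1) ` S \<union> (\<lambda>s. gdist E s1 s) ` S)"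
  have D1: "gdist E s s1 \<le> D" if "s \<in> S" for s
    unfolding D_def using that Sfin by (intro Max_ge) auto
  have D2: "gdist E s1 s \<le> D" if "s \<in> S" for s
    unfolding D_def using that Sfin by (intro Max_ge) auto
  define Sph where "Sph r = {v\<in>V. gdist E v s1 = r}" for r
  define P where "P = PiE S (\<lambda>_. {- int D..int D})"
  define C where "C = card P"
  have Pfin: "finite P" unfolding P_def using Sfin by (intro finite_PiE) auto
  have sph: "finite (Sph r) \<and> card (Sph r) \<le> C" for r
  proof -
    define \<phi> where "\<phi> v = restrict (\<lambda>s. int (gdist E v s) - int r) S" for v
    have img: "\<phi> ` Sph r \<subseteq> P"
    proof
      fix f assume "f \<in> \<phi> ` Sph r"
      then obtain v where v: "v \<in> V" "gdist E v s1 = r" and f: "f = \<phi> v"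
        unfolding Sph_def by auto
      have "int (gdist E v s) - int r \<in> {- int D..int D}" if s: "s \<in> S" for s
      proof -
        have sV: "s \<in> V" using s SV by auto
        have "gdist E v s \<le> gdist E v s1 + gdist E s1 s"
          using conn[OF v(1) s1V] conn[OF s1V sV] by (rule gdist_tri)
        moreover have "gdist E v s1 \<le> gdist E v s + gdist E s s1"
          using conn[OF v(1) sV] conn[OF sV s1V] by (rule gdist_tri)
        ultimately show ?thesis using D1[OF s] D2[OF s] v(2) by auto
      qed
      then show "f \<in> P" unfolding f P_def \<phi>_def by auto
    qed
    have inj: "inj_on \<phi> (Sph r)"
    proof (rule inj_onI)
      fix v w assume v: "v \<in> Sph r" and w: "w \<in> Sph r" and eq: "\<phi> v = \<phi> w"
      show "v = w"
      proof (rule ccontr)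
        assume "v \<noteq> w"
        then obtain x where x: "x \<in> S" "gdist E v x \<noteq> gdist E w x"
          using Sres v w unfolding resolving_set_def resolves_def Sph_def by blast
        have "\<phi> v x = \<phi> w x" using eq by simp
        then show False using x unfolding \<phi>_def by simp
      qed
    qed
    have "finite (Sph r)" using inj img Pfin
      by (metis finite_imageD finite_subset)
    moreover have "card (Sph r) \<le> C"
      using inj img Pfin unfolding C_def by (metis card_image card_mono)
    ultimately show ?thesis by auto
  qed
  have ballfin: "finite {v\<in>V. gdist E v s1 \<le> R}" for R
  proof -
    have "{v\<in>V. gdist E v s1 \<le> R} \<subseteq> (\<Union>r\<in>{..R}. Sph r)" unfolding Sph_def by auto
    then show ?thesis using sph by (meson finite_UN_I finite_atMost finite_subset)
  qed
  have unb: "\<exists>k. gdist E (u k) s1 \<ge> R" if u: "u \<in> F" for u R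
  proof (rule ccontr)
    assume "\<not> ?thesis"
    moreover have "\<forall>k. u k \<in> V" using Fray u ray_V by blast
    ultimately have "range u \<subseteq> {v\<in>V. gdist E v s1 \<le> R}"
      by (auto simp: not_le less_imp_le)
    then have "finite (range u)" using ballfin finite_subset by blast
    moreover have "inj u" using Fray u unfolding metric_ray_def by auto
    ultimately show False by (meson finite_imageD infinite_UNIV_nat)
  qed
  obtain F' where F': "F' \<subseteq> F" "finite F'" "card F' = Suc C"
    using Finf infinite_arbitrarily_large by blast
  define R where "R = Max ((\<lambda>u. gdist E (u 0) s1) ` F')"
  have hit: "\<exists>k. gdist E (u k) s1 = R" if u: "u \<in> F'" for u
  proof (rule discrete_ivt)
    show "gdist E (u 0) s1 \<le> R" unfolding R_def using u F' by (intro Max_ge) auto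
    show "\<exists>k. gdist E (u k) s1 \<ge> R" using unb u F' by auto
    fix k
    have ray: "metric_ray V E u" using Fray u F' by auto
    then have e: "E (u (Suc k)) (u k)" unfolding metric_ray_def using sym by blast
    have "u k \<in> V" using ray by (rule ray_V)
    then show "gdist E (u (Suc k)) s1 \<le> gdist E (u k) s1 + 1"
      using gdist_step[OF e conn[OF _ s1V]] by auto
  qed
  define h where "h u = u (SOME k::nat. gdist E (u k) s1 = R)" for u :: "nat \<Rightarrow> 'a"
  have hS: "h u \<in> Sph R" if "u \<in> F'" for u
  proof -
    have "gdist E (h u) s1 = R" unfolding h_def using someI_ex[OF hit[OF that]] .
    moreover have "h u \<in> V" using Fray that F' ray_V unfolding h_def by blast
    ultimately show ?thesis unfolding Sph_def by auto
  qed
  have hinj: "inj_on h F'"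
  proof (rule inj_onI)
    fix u w assume "u \<in> F'" "w \<in> F'" "h u = h w"
    moreover have "h u \<in> range u" "h w \<in> range w" unfolding h_def by auto
    ultimately show "u = w" using Fdisj F'(1) by (metis IntI empty_iff subsetD)
  qed
  have "card F' \<le> card (Sph R)"
    using hinj hS sph[of R] by (metis card_image card_mono image_subsetI)
  then show False using F'(3) sph[of R] by auto
qed

end
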